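(* Let $p$ be a prime and $v$ an integer with $1<v<p-1$ and $p\not\equiv1\pmod v$. Then for every permutation $\pi$ of $\{1,\dots,p-1\}$, the sequence $\pi_v=(\pi(1)\,\%\,v,\dots,\pi(p-1)\,\%\,v)$ has least period $p-1$.
   Context: $x\,\%\,v$ denotes the least nonnegative remainder modulo $v$. The sequence of length $p-1$ is regarded cyclically; its least period is the smallest $\rho>0$ with $\pi_v(i+\rho)=\pi_v(i)$ for all indices $i$ modulo $p-1$. *)

theory Defs
  imports "HOL-Number_Theory.Number_Theory"
begin

definition is_cyc_period :: "nat \<Rightarrow> (nat \<Rightarrow> 'a) \<Rightarrow> nat \<Rightarrow> bool" where
  "is_cyc_period n a \<rho> \<longleftrightarrow> 0 < \<rho> \<and> (\<forall>i\<in>{1..n}. a (((i - 1 + \<rho>) mod n) + 1) = a i)"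

definition least_cyc_period :: "nat \<Rightarrow> (nat \<Rightarrow> 'a) \<Rightarrow> nat" where
  "least_cyc_period n a = (LEAST \<rho>. is_cyc_period n a \<rho>)"

end

theory Submission
  imports Defs
begin

lemma count_diff:
  fixes v :: nat
  assumes "1 < v"
  shows "(\<Sum>x=1..n. (if x mod v = 1 then (1::int) else if x mod v = 0 then -1 else 0))
         = (if n mod v = 0 then 0 else 1)"
proof (induction n)
  case 0
  then show ?case by simp
next
  case (Suc n)
  have s: "(\<Sum>x=1..Suc n. (if x mod v = 1 then (1::int) else if x mod v = 0 then -1 else 0))
     = (\<Sum>x=1..n. (if x mod v = 1 then (1::int) else if x mod v = 0 then -1 else 0))
       + (if Suc n mod v = 1 then (1::int) else if Suc n mod v = 0 then -1 else 0)"
    by simp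
  have m: "Suc n mod v = (if n mod v + 1 = v then 0 else n mod v + 1)"
    using assms by (simp add: mod_Suc)
  show ?case
  proof (cases "n mod v + 1 = v")
    case True
    then have "Suc n mod v = 0" "n mod v \<noteq> 0" using m assms by auto
    then show ?thesis unfolding s Suc.IH by simp
  next
    case False
    then have e: "Suc n mod v = n mod v + 1" using m by simp
    show ?thesis
    proof (cases "n mod v = 0")
      case True
      then show ?thesis unfolding s Suc.IH e by simp
    next
      case False
      then show ?thesis unfolding s Suc.IH e by simp
    qed
  qed
qed

lemma periodic_shift:
  fixes G :: "nat \<Rightarrow> int"
  assumes "\<And>j. G (j + d) = G j"
  shows "G (k * d + j) = G j"
proof (induction k)
  case 0 then show ?case by simp
next
  case (Suc k)
  have eq: "Suc k * d + j = (k * d + j) + d" by simp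
  have "G (Suc k * d + j) = G ((k * d + j) + d)" by (simp only: eq)
  also have "\<dots> = G (k * d + j)" by (rule assms)
  also have "\<dots> = G j" by (rule Suc.IH)
  finally show ?case .
qed

lemma periodic_sum:
  fixes G :: "nat \<Rightarrow> int"
  assumes "\<And>j. G (j + d) = G j"
  shows "(\<Sum>j<k * d. G j) = int k * (\<Sum>j<d. G j)"
proof (induction k)
  case 0 then show ?case by simp
next
  case (Suc k)
  have u: "{..<Suc k * d} = {..<k*d} \<union> {k*d..<k*d+d}" by auto
  have "(\<Sum>j<Suc k * d. G j) = (\<Sum>j<k*d. G j) + (\<Sum>j\<in>{k*d..<k*d+d}. G j)"
    unfolding u by (rule sum.union_disjoint) auto
  also have "(\<Sum>j\<in>{k*d..<k*d+d}. G j) = (\<Sum>j<d. G (k*d + j))"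
  proof -
    have "{k*d..<k*d+d} = (\<lambda>j. k*d + j) ` {..<d}" 
      apply (auto simp: image_iff)
      subgoal for x by (rule bexI[of _ "x - k*d"]) auto
      done
    moreover have "inj_on (\<lambda>j. k*d + j) {..<d}" by (auto simp: inj_on_def)
    ultimately show ?thesis by (simp add: sum.reindex)
  qed
  also have "(\<Sum>j<d. G (k*d + j)) = (\<Sum>j<d. G j)" using periodic_shift[of G d, OF assms] by simp
  finally show ?case using Suc.IH by (simp add: algebra_simps)
qed

theorem lemma1:
  fixes p v :: nat and \<pi> :: "nat \<Rightarrow> nat"
  assumes "prime p"
    and "1 < v" and "v < p - 1"
    and "\<not> [p = 1] (mod v)"
    and "bij_betw \<pi> {1..p-1} {1..p-1}"
  shows "least_cyc_period (p - 1) (\<lambda>i. \<pi> i mod v) = p - 1"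
proof -
  define n where "n = p - 1"
  have p2: "p \<ge> 2" using assms(1) prime_ge_2_nat by blast
  have n0: "n > 0" using p2 n_def by simp
  have nmod: "n mod v \<noteq> 0"
  proof
    assume "n mod v = 0"
    moreover have "p = Suc n" using p2 n_def by simp
    ultimately have "[p = 1] (mod v)" unfolding cong_def by (metis mod_Suc_eq One_nat_def)
    with assms(4) show False by simp
  qed
  define h :: "nat \<Rightarrow> int" where "h x = (if x mod v = 1 then 1 else if x mod v = 0 then -1 else 0)" for x
  define G where "G j = h (\<pi> (j mod n + 1))" for j
  have total: "(\<Sum>j<n. G j) = 1"
  proof -
    have "(\<Sum>j<n. G j) = (\<Sum>j<n. h (\<pi> (j + 1)))" unfolding G_def by simp
    also have "\<dots> = (\<Sum>i=1..n. h (\<pi> i))"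
    proof -
      have "{1..n} = {Suc 0..<Suc n}" by auto
      then show ?thesis using sum.atLeast_Suc_lessThan_Suc_shift[of "\<lambda>i. h (\<pi> i)" 0 n]
        by (simp add: lessThan_atLeast0 comp_def)
    qed
    also have "\<dots> = (\<Sum>x=1..n. h x)"
      using sum.reindex_bij_betw[OF assms(5)[folded n_def], of h] by simp
    also have "\<dots> = 1" unfolding h_def using count_diff[OF assms(2)] nmod by simp
    finally show ?thesis .
  qed
  have per_n: "is_cyc_period n (\<lambda>i. \<pi> i mod v) n"
  proof -
    have "((i - 1 + n) mod n) + 1 = i" if "i \<in> {1..n}" for i
    proof -
      have "(i - 1 + n) mod n = (i - 1) mod n" by simp
      also have "\<dots> = i - 1" using that by (intro mod_less) auto
      finally have e: "(i - 1 + n) mod n = i - 1" .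
      show ?thesis unfolding e using that by simp
    qed
    then show ?thesis unfolding is_cyc_period_def using n0 by auto
  qed
  have ge: "n \<le> \<rho>" if r: "is_cyc_period n (\<lambda>i. \<pi> i mod v) \<rho>" for \<rho>
  proof (rule ccontr)
    assume "\<not> n \<le> \<rho>"
    hence lt: "\<rho> < n" by simp
    have r0: "\<rho> > 0" and rp: "\<And>i. i \<in> {1..n} \<Longrightarrow> \<pi> (((i - 1 + \<rho>) mod n) + 1) mod v = \<pi> i mod v"
      using r unfolding is_cyc_period_def by auto
    have Gr: "G (j + \<rho>) = G j" for j
    proof -
      have "j mod n + 1 \<in> {1..n}" using n0 by (simp add: Suc_leI)
      from rp[OF this] have "\<pi> (((j mod n + \<rho>) mod n) + 1) mod v = \<pi> (j mod n + 1) mod v" by simp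
      moreover have "(j mod n + \<rho>) mod n = (j + \<rho>) mod n" by (simp add: mod_add_left_eq)
      ultimately have e: "\<pi> ((j + \<rho>) mod n + 1) mod v = \<pi> (j mod n + 1) mod v" by simp
      have hm: "h x = h y" if "x mod v = y mod v" for x y unfolding h_def using that by simp
      show ?thesis unfolding G_def by (rule hm[OF e])
    qed
    have Gn: "G (j + n * y) = G j" for j y unfolding G_def by simp
    have Grx: "G (j + \<rho> * x) = G j" for j x
    proof (induction x)
      case 0 then show ?case by simp
    next
      case (Suc x)
      have eq: "j + \<rho> * Suc x = (j + \<rho> * x) + \<rho>" by simp
      have "G (j + \<rho> * Suc x) = G ((j + \<rho> * x) + \<rho>)" by (simp only: eq)
      also have "\<dots> = G (j + \<rho> * x)" by (rule Gr)
      also have "\<dots> = G j" by (rule Suc.IH)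
      finally show ?case .
    qed
    define d where "d = gcd \<rho> n"
    have "\<exists>x y. \<rho> * x = n * y + gcd \<rho> n" using bezout_nat[of \<rho> n] r0 by simp
    then obtain x y where xy: "\<rho> * x = n * y + d" unfolding d_def by blast
    have Gd: "G (j + d) = G j" for j
    proof -
      have eqx: "j + \<rho> * x = j + d + n * y" using xy by linarith
      have "G j = G (j + \<rho> * x)" using Grx by simp
      also have "G (j + \<rho> * x) = G (j + d + n * y)" using eqx by (simp only:)
      also have "G (j + d + n * y) = G (j + d)" using Gn by simp
      finally show ?thesis by simp
    qed
    have dn: "d dvd n" unfolding d_def by simp
    have d0: "d > 0" unfolding d_def using r0 by simp
    have "gcd \<rho> n \<le> \<rho>" using r0 by (intro gcd_le1_nat) simp
    then have dlt: "d < n" unfolding d_def using lt by linarith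
    define m where "m = n div d"
    have nm: "n = m * d" using dn m_def by simp
    have m2: "m \<ge> 2"
    proof (rule ccontr)
      assume "\<not> m \<ge> 2"
      then have "m = 0 \<or> m = 1" by linarith
      then show False
      proof
        assume "m = 0" then have "n = 0" unfolding nm by simp
        with n0 show False by simp
      next
        assume "m = 1" then have "n = d" unfolding nm by simp
        with dlt show False by simp
      qed
    qed
    have t2: "(\<Sum>j<m * d. G j) = 1" using total unfolding nm .
    have ps: "(\<Sum>j<m * d. G j) = int m * (\<Sum>j<d. G j)" by (rule periodic_sum[of G d m, OF Gd])
    have "int m * (\<Sum>j<d. G j) = 1" using ps t2 by linarith
    then have eq1: "1 = int m * (\<Sum>j<d. G j)" by (rule sym)
    have "int m dvd 1" using eq1 by (rule dvdI)
    then have "int m \<le> 1" by (rule zdvd_imp_le) simp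
    with m2 show False by linarith
  qed
  have "least_cyc_period n (\<lambda>i. \<pi> i mod v) = n"
    unfolding least_cyc_period_def using per_n ge by (intro Least_equality) auto
  then show ?thesis using n_def by simp
qed

end
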